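(* Assume the standing setting below and run the DMFW algorithm with $\eta_k=\frac{2}{k+2}$ (and any $\gamma_k\in(0,1]$). Then for every $i\in\mathcal N$ and $k\ge1$, $$\|\hat x_k^i-\bar x_k\|\le\frac{2C_1}{k+2},\qquad C_1=k_0\sqrt nD.$$
   Context: Setting. There are $n$ agents $\mathcal N=\{1,\dots,n\}$ connected by a connected graph $\mathcal G=(\mathcal N,\mathcal E)$ with weight matrix $C=[c_{ij}]\in\mathbb R^{n\times n}$, where $c_{ij}\ge 0$ and $c_{ij}=0$ whenever $j\ne i$ and $(i,j)\notin\mathcal E$. $C$ is doubly stochastic, i.e. all row sums and all column sums equal $1$. Let $\lambda$ be the second largest eigenvalue of $C$ in magnitude. It is assumed that $|\lambda|<1$ and that for all vectors $x^1,\dots,x^n\in\mathbb R^p$, with $\bar x=\frac1n\sum_i x^i$ and $\hat x^i=\sum_j c_{ij}x^j$, one has $\big(\sum_i\|\hat x^i-\bar x\|^2\big)^{1/2}\le|\lambda|\big(\sum_i\|x^i-\bar x\|^2\big)^{1/2}$. Let $k_0$ be the smallest positive integer with $|\lambda|\le (k_0/(k_0+1))^2$. Problem data. $\mathcal X\subset\mathbb R^p$ is convex and compact with diameter $D$, i.e. $\|x-x'\|\le D$ for all $x,x'\in\mathcal X$. For each $i$, $\xi^i$ is a random variable. The function $f_i(\cdot,\xi)$ is differentiable with $L$-Lipschitz gradient for every $\xi$. $F_i(x)=\mathbb E[f_i(x,\xi^i)]$ is differentiable with $\nabla F_i(x)=\mathbb E[\nabla f_i(x,\xi^i)]$ and $L$-Lipschitz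 gradient. For all $x\in\mathcal X$ and $i$, $\mathbb E\|\nabla F_i(x)-\nabla f_i(x,\xi^i)\|^2\le\delta^2$. Set $F=\frac1n\sum_{i=1}^nF_i$. DMFW algorithm. Fix step sizes $\gamma_k,\eta_k\in(0,1]$ and deterministic initial points $x_1^i\in\mathcal X$. The samples $\xi_k^i$ ($k\ge1$, $i\in\mathcal N$) are mutually independent, and $\xi_k^i$ has the distribution of $\xi^i$. For $k=1,2,\dots$ and each $i$: - $\hat x_k^i=\sum_{j=1}^n c_{ij}x_k^j$. - For $k=1$: $y_1^i=s_1^i=\nabla f_i(\hat x_1^i,\xi_1^i)$. For $k\ge2$: $y_k^i=(1-\gamma_k)y_{k-1}^i+\nabla f_i(\hat x_k^i,\xi_k^i)-(1-\gamma_k)\nabla f_i(\hat x_{k-1}^i,\xi_k^i)$ and $s_k^i=\sum_j c_{ij}s_{k-1}^j+y_k^i-y_{k-1}^i$. - $p_k^i=\sum_j c_{ij}s_k^j$. - $\theta_k^i\in\arg\min_{\phi\in\mathcal X}\langle p_k^i,\phi\rangle$. - $x_{k+1}^i=\hat x_k^i+\eta_k(\theta_k^i-\hat x_k^i)$. Notation: $\bar x_k=\frac1n\sum_i x_k^i$. *)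

theory Defs
  imports "HOL-Analysis.Analysis" "Jordan_Normal_Form.Char_Poly"
begin

definition weight_cmat :: "nat \<Rightarrow> (nat \<Rightarrow> nat \<Rightarrow> real) \<Rightarrow> complex Matrix.mat" where
  "weight_cmat n C = Matrix.mat n n (\<lambda>(i,j). complex_of_real (C i j))"

text \<open>Eigenvalues of C (complex roots of the characteristic polynomial), with the
  top eigenvalue 1 of a doubly stochastic matrix removed once (counting algebraic multiplicity).\<close>
definition remaining_eigs :: "nat \<Rightarrow> (nat \<Rightarrow> nat \<Rightarrow> real) \<Rightarrow> complex set" where
  "remaining_eigs n C =
     {\<mu>. poly (char_poly (weight_cmat n C)) \<mu> = 0 \<and>
          (\<mu> \<noteq> 1 \<or> order 1 (char_poly (weight_cmat n C)) \<ge> 2)}"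

text \<open>Magnitude of the second largest eigenvalue (in magnitude); 0 if there is none (n = 1).\<close>
definition second_eig_mag :: "nat \<Rightarrow> (nat \<Rightarrow> nat \<Rightarrow> real) \<Rightarrow> real" where
  "second_eig_mag n C =
     (if remaining_eigs n C = {} then 0 else Max (cmod ` remaining_eigs n C))"

definition doubly_stochastic :: "nat \<Rightarrow> (nat \<Rightarrow> nat \<Rightarrow> real) \<Rightarrow> bool" where
  "doubly_stochastic n C \<longleftrightarrow>
     (\<forall>i<n. \<forall>j<n. C i j \<ge> 0) \<and>
     (\<forall>i<n. (\<Sum>j<n. C i j) = 1) \<and> (\<forall>j<n. (\<Sum>i<n. C i j) = 1)"

definition connected_graph :: "nat \<Rightarrow> (nat \<times> nat) set \<Rightarrow> bool" where
  "connected_graph n E \<longleftrightarrow>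
     E \<subseteq> {..<n} \<times> {..<n} \<and> sym E \<and> (\<forall>i<n. \<forall>j<n. (i, j) \<in> E\<^sup>*)"

definition avg :: "nat \<Rightarrow> (nat \<Rightarrow> 'a::real_vector) \<Rightarrow> 'a" where
  "avg n x = (1 / real n) *\<^sub>R (\<Sum>i<n. x i)"

definition k0_of :: "real \<Rightarrow> nat" where
  "k0_of lam = (LEAST k::nat. 0 < k \<and> \<bar>lam\<bar> \<le> (real k / (real k + 1))\<^sup>2)"

end

theory Submission
  imports Defs
begin

lemma avg_dev_bound:
  fixes w :: "nat \<Rightarrow> 'a::real_normed_vector"
  assumes "0 < n" "\<forall>i<n. \<forall>j<n. norm (w i - w j) \<le> D"
  shows "\<forall>i<n. norm (w i - avg n w) \<le> D"
proof (intro allI impI)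
  fix i assume i: "i < n"
  have s: "(\<Sum>j<n. w i) = real n *\<^sub>R w i" by (simp add: sum_constant_scaleR)
  have "w i - avg n w = (1 / real n) *\<^sub>R (\<Sum>j<n. w i - w j)"
    using assms(1) by (simp add: avg_def sum_subtractf scaleR_diff_right s)
  hence "norm (w i - avg n w) = (1 / real n) * norm (\<Sum>j<n. w i - w j)" by simp
  also have "\<dots> \<le> (1 / real n) * (\<Sum>j<n. norm (w i - w j))"
    by (intro mult_left_mono norm_sum) auto
  also have "\<dots> \<le> (1 / real n) * (\<Sum>j<n. D)"
    using assms(2) i by (intro mult_left_mono sum_mono) auto
  also have "\<dots> = D" using assms(1) by simp
  finally show "norm (w i - avg n w) \<le> D" .
qed

lemma L2_dev_bound:
  fixes w :: "nat \<Rightarrow> 'a::real_normed_vector"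
  assumes "0 < n" "\<forall>i<n. \<forall>j<n. norm (w i - w j) \<le> D"
  shows "L2_set (\<lambda>i. norm (w i - avg n w)) {..<n} \<le> sqrt (real n) * D"
proof -
  have D: "0 \<le> D" using assms by (metis norm_ge_zero order_trans)
  have "L2_set (\<lambda>i. norm (w i - avg n w)) {..<n} \<le> L2_set (\<lambda>i. D) {..<n}"
    using avg_dev_bound[OF assms] by (intro L2_set_mono) auto
  also have "\<dots> = sqrt (real n) * D" using D by (simp add: L2_set_constant)
  finally show ?thesis .
qed

lemma lin_comb_eq:
  fixes a b c d :: "'a::real_vector"
  shows "(f *\<^sub>R a + e *\<^sub>R b) - (f *\<^sub>R c + e *\<^sub>R d) = f *\<^sub>R (a - c) + e *\<^sub>R (b - d)"
  by (simp add: scaleR_diff_right algebra_simps)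

lemma key_ineq:
  fixes m k :: real
  assumes "1 \<le> m" "m \<le> k + 2" "0 \<le> k"
  shows "m * (k*(m+1)+2) * (k+3) \<le> (m+1)^2 * (k+2)^2"
proof -
  have a: "k*(m+1)+2 \<le> (m+1)*(k+2)" using assms by (simp add: algebra_simps)
  have "m * (k*(m+1)+2) * (k+3) \<le> m * ((m+1)*(k+2)) * (k+3)"
    using assms a by (intro mult_right_mono mult_left_mono) auto
  also have "\<dots> = (m * (k+3)) * ((m+1)*(k+2))" by simp
  also have "\<dots> \<le> ((m+1)*(k+2)) * ((m+1)*(k+2))"
    using assms by (intro mult_right_mono) (auto simp: algebra_simps)
  finally show ?thesis by (simp add: power2_eq_square algebra_simps)
qed

lemma step_ineq:
  fixes lam m k d a B :: real
  assumes "0 \<le> lam" "lam \<le> (m/(m+1))^2" "1 \<le> m" "m \<le> k + 2" "1 \<le> k" "0 \<le> d"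
    "a \<le> 2*m*d/(k+2)" "B \<le> (k/(k+2))*a + (2/(k+2))*d"
  shows "lam * B \<le> 2*m*d/(k+3)"
proof -
  have "B \<le> (k/(k+2))*(2*m*d/(k+2)) + (2/(k+2))*d"
    using assms(5,7,8) by (smt (verit) divide_nonneg_nonneg mult_left_mono)
  also have "\<dots> = 2*d*(k*m+k+2)/(k+2)^2"
  proof -
    have kp: "k + 2 \<noteq> 0" using assms by simp
    have e1: "(k/(k+2))*(2*m*d/(k+2)) = 2*d*(k*m)/(k+2)^2" by (simp add: power2_eq_square)
    have e2: "(2/(k+2))*d = 2*d*(k+2)/(k+2)^2" using kp by (simp add: power2_eq_square)
    have "2*d*(k*m)/(k+2)^2 + 2*d*(k+2)/(k+2)^2 = (2*d*(k*m) + 2*d*(k+2))/(k+2)^2"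
      by (rule add_divide_distrib[symmetric])
    also have "\<dots> = 2*d*(k*m+k+2)/(k+2)^2" by (simp add: algebra_simps)
    finally show ?thesis using e1 e2 by simp
  qed
  finally have B: "B \<le> 2*d*(k*m+k+2)/(k+2)^2" .
  have c0: "0 \<le> 2*d*(k*m+k+2)/(k+2)^2" using assms by simp
  have "lam * B \<le> lam * (2*d*(k*m+k+2)/(k+2)^2)" using B assms(1) by (rule mult_left_mono)
  also have "\<dots> \<le> (m/(m+1))^2 * (2*d*(k*m+k+2)/(k+2)^2)" using assms(2) c0 by (rule mult_right_mono)
  also have "\<dots> \<le> 2*m*d/(k+3)"
  proof -
    have K: "m * (k*(m+1)+2) * (k+3) \<le> (m+1)^2 * (k+2)^2" using key_ineq assms by simp
    have "m * (m * (k*(m+1)+2) * (k+3)) \<le> m * ((m+1)^2 * (k+2)^2)"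
      using K assms by (intro mult_left_mono) auto
    hence "m^2 * (k*m+k+2) * (k+3) \<le> m * (m+1)^2 * (k+2)^2"
      by (simp add: power2_eq_square algebra_simps)
    hence "(m^2 * (k*m+k+2) * (k+3)) * (2*d) \<le> (m * (m+1)^2 * (k+2)^2) * (2*d)"
      using assms by (intro mult_right_mono) auto
    hence H: "(m^2 * (k*m+k+2) * (k+3)) * (2*d) \<le> (m * (m+1)^2 * (k+2)^2) * (2*d)" .
    have nz: "(m+1)^2*(k+2)^2*(k+3) > 0" using assms by simp
    have "(m/(m+1))^2 * (2*d*(k*m+k+2)/(k+2)^2) = (m^2 * (2*d*(k*m+k+2))) / ((m+1)^2*(k+2)^2)"
      by (simp add: power_divide)
    also have "\<dots> = (m^2 * (2*d*(k*m+k+2)) * (k+3)) / ((m+1)^2*(k+2)^2*(k+3))"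
      using assms by simp
    also have "\<dots> = ((m^2 * (k*m+k+2) * (k+3)) * (2*d)) / ((m+1)^2*(k+2)^2*(k+3))"
      by (simp add: ac_simps)
    also have "\<dots> \<le> ((m * (m+1)^2 * (k+2)^2) * (2*d)) / ((m+1)^2*(k+2)^2*(k+3))"
      using H nz by (intro divide_right_mono) auto
    also have "\<dots> = (2*m*d * ((m+1)^2*(k+2)^2)) / ((k+3) * ((m+1)^2*(k+2)^2))"
      by (simp add: ac_simps)
    also have "\<dots> = 2*m*d/(k+3)"
      using assms by (intro mult_divide_mult_cancel_right) auto
    finally show ?thesis .
  qed
  finally show ?thesis .
qed

theorem lemma1:
  fixes n :: nat and E :: "(nat \<times> nat) set" and C :: "nat \<Rightarrow> nat \<Rightarrow> real"
    and X :: "'a::euclidean_space set" and D L \<delta> :: real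
    and f :: "nat \<Rightarrow> 'a \<Rightarrow> 'b \<Rightarrow> real" and g :: "nat \<Rightarrow> 'a \<Rightarrow> 'b \<Rightarrow> 'a"
    and \<xi> :: "nat \<Rightarrow> nat \<Rightarrow> 'b"
    and \<gamma> \<eta> :: "nat \<Rightarrow> real"
    and x xh y s p \<theta> :: "nat \<Rightarrow> nat \<Rightarrow> 'a"
  assumes n_pos: "0 < n"
    and graph: "connected_graph n E"
    and C_support: "\<forall>i<n. \<forall>j<n. j \<noteq> i \<and> (i, j) \<notin> E \<longrightarrow> C i j = 0"
    and C_ds: "doubly_stochastic n C"
    and lam_lt1: "second_eig_mag n C < 1"
    and contraction: "\<forall>z :: nat \<Rightarrow> 'a.
          sqrt (\<Sum>i<n. (norm ((\<Sum>j<n. C i j *\<^sub>R z j) - avg n z))\<^sup>2)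
            \<le> second_eig_mag n C * sqrt (\<Sum>i<n. (norm (z i - avg n z))\<^sup>2)"
    and X_convex: "convex X" and X_compact: "compact X"
    and X_diam: "\<forall>u\<in>X. \<forall>v\<in>X. norm (u - v) \<le> D"
    and f_grad: "\<forall>i<n. \<forall>e u. ((\<lambda>v. f i v e) has_derivative (\<lambda>h. g i u e \<bullet> h)) (at u)"
    and g_lip: "\<forall>i<n. \<forall>e u v. norm (g i u e - g i v e) \<le> L * norm (u - v)"
    and gamma: "\<forall>k\<ge>1. 0 < \<gamma> k \<and> \<gamma> k \<le> 1"
    and eta: "\<forall>k. \<eta> k = 2 / (real k + 2)"
    and init: "\<forall>i<n. x 1 i \<in> X"
    and xh_def: "\<forall>k\<ge>1. \<forall>i<n. xh k i = (\<Sum>j<n. C i j *\<^sub>R x k j)"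
    and y1: "\<forall>i<n. y 1 i = g i (xh 1 i) (\<xi> 1 i)"
    and s1: "\<forall>i<n. s 1 i = y 1 i"
    and y_rec: "\<forall>k\<ge>2. \<forall>i<n. y k i = (1 - \<gamma> k) *\<^sub>R y (k - 1) i + g i (xh k i) (\<xi> k i)
                   - (1 - \<gamma> k) *\<^sub>R g i (xh (k - 1) i) (\<xi> k i)"
    and s_rec: "\<forall>k\<ge>2. \<forall>i<n. s k i = (\<Sum>j<n. C i j *\<^sub>R s (k - 1) j) + y k i - y (k - 1) i"
    and p_def: "\<forall>k\<ge>1. \<forall>i<n. p k i = (\<Sum>j<n. C i j *\<^sub>R s k j)"
    and theta_lmo: "\<forall>k\<ge>1. \<forall>i<n. \<theta> k i \<in> X \<and> (\<forall>\<phi>\<in>X. p k i \<bullet> \<theta> k i \<le> p k i \<bullet> \<phi>)"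
    and x_rec: "\<forall>k\<ge>1. \<forall>i<n. x (k + 1) i = xh k i + \<eta> k *\<^sub>R (\<theta> k i - xh k i)"
  shows "\<forall>i<n. \<forall>k\<ge>1. norm (xh k i - avg n (x k))
           \<le> 2 * (real (k0_of (second_eig_mag n C)) * sqrt (real n) * D) / (real k + 2)"

proof -
  define lam where "lam = second_eig_mag n C"
  define m where "m = k0_of lam"
  have D0: "0 \<le> D" using init n_pos X_diam by (metis norm_ge_zero order_trans)
  show ?thesis
  proof (cases "n = 1")
    case True
    have C00: "C 0 0 = 1" using C_ds True unfolding doubly_stochastic_def by auto
    show ?thesis
    proof (intro allI impI)
      fix i :: nat and k :: nat assume i: "i < n" and k: "1 \<le> k"
      have i0: "i = 0" using i True by simp
      have "xh k i = x k 0" using xh_def k i0 True C00 by simp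
      moreover have "avg n (x k) = x k 0" using True by (simp add: avg_def)
      ultimately show "norm (xh k i - avg n (x k))
           \<le> 2 * (real (k0_of (second_eig_mag n C)) * sqrt (real n) * D) / (real k + 2)"
        using D0 by simp
    qed
  next
    case False
    hence n2: "2 \<le> n" using n_pos by simp
    have lam0: "0 \<le> lam"
    proof -
      define b :: 'a where "b = (SOME i. i \<in> Basis)"
      have b0: "b \<noteq> 0" unfolding b_def by (simp add: SOME_Basis nonzero_Basis)
      define z :: "nat \<Rightarrow> 'a" where "z = (\<lambda>i. if i = 0 then b else 0)"
      have sz: "(\<Sum>i<n. z i) = b" unfolding z_def using n_pos by (simp add: sum.delta)
      have "z 0 - avg n z = (1 - 1 / real n) *\<^sub>R b"
        unfolding avg_def sz by (simp add: z_def algebra_simps)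
      hence "norm (z 0 - avg n z) = (1 - 1 / real n) * norm b" using n2 by simp
      moreover have "0 < (1 - 1 / real n)" using n2 by (simp add: field_simps)
      ultimately have p: "0 < norm (z 0 - avg n z)" using b0 by simp
      have "(norm (z 0 - avg n z))\<^sup>2 \<le> (\<Sum>i<n. (norm (z i - avg n z))\<^sup>2)"
        using n_pos by (intro member_le_sum) auto
      hence "0 < (\<Sum>i<n. (norm (z i - avg n z))\<^sup>2)" using p
        by (smt (verit) zero_less_power)
      hence pos: "0 < sqrt (\<Sum>i<n. (norm (z i - avg n z))\<^sup>2)" by simp
      have "0 \<le> sqrt (\<Sum>i<n. (norm ((\<Sum>j<n. C i j *\<^sub>R z j) - avg n z))\<^sup>2)" by (intro real_sqrt_ge_zero sum_nonneg) auto
      also have "\<dots> \<le> lam * sqrt (\<Sum>i<n. (norm (z i - avg n z))\<^sup>2)"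
        using contraction unfolding lam_def by blast
      finally show ?thesis using pos by (simp add: zero_le_mult_iff)
    qed
    have lam1: "lam < 1" using lam_lt1 lam_def by simp
    have ex: "\<exists>k::nat. 0 < k \<and> \<bar>lam\<bar> \<le> (real k / (real k + 1))\<^sup>2"
    proof -
      obtain N :: nat where N: "2 / (1 - lam) < real N" using reals_Archimedean2 by blast
      have Npos: "0 < N" using N lam1
        by (metis divide_pos_pos diff_gt_0_iff_gt less_numeral_extra(1) of_nat_0_less_iff order.strict_trans zero_less_numeral)
      have "2 < real N * (1 - lam)" using N lam1 by (simp add: field_simps)
      hence t: "2 / (real N + 1) \<le> 1 - lam" using lam1 by (simp add: field_simps)
      define t where "t = 1 / (real N + 1)"
      have eq: "real N / (real N + 1) = 1 - t" unfolding t_def by (simp add: field_simps)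
      have "1 - 2 * t \<le> (1 - t)\<^sup>2" by (simp add: power2_eq_square algebra_simps)
      moreover have "lam \<le> 1 - 2 * t" using t unfolding t_def by simp
      ultimately show ?thesis using Npos lam0 eq by (intro exI[of _ N]) auto
    qed
    have mprop: "0 < m \<and> \<bar>lam\<bar> \<le> (real m / (real m + 1))\<^sup>2"
      unfolding m_def k0_of_def by (rule LeastI_ex[OF ex])
    hence m1: "1 \<le> real m" and lamq: "lam \<le> (real m / (real m + 1))\<^sup>2" using lam0 by auto
    define \<Delta> where "\<Delta> k = L2_set (\<lambda>i. norm (x k i - avg n (x k))) {..<n}" for k
    define A where "A k = L2_set (\<lambda>i. norm (xh k i - avg n (x k))) {..<n}" for k
    define d where "d = sqrt (real n) * D"
    have d0: "0 \<le> d" unfolding d_def using D0 by simp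
    have F1: "A k \<le> lam * \<Delta> k" if "k \<ge> 1" for k
    proof -
      have "A k = sqrt (\<Sum>i<n. (norm ((\<Sum>j<n. C i j *\<^sub>R x k j) - avg n (x k)))\<^sup>2)"
        unfolding A_def L2_set_def using xh_def that by (intro arg_cong[where f=sqrt] sum.cong) auto
      also have "\<dots> \<le> lam * sqrt (\<Sum>i<n. (norm (x k i - avg n (x k)))\<^sup>2)"
        using contraction unfolding lam_def by blast
      finally show ?thesis unfolding \<Delta>_def L2_set_def .
    qed
    have F2: "\<Delta> 1 \<le> d" unfolding \<Delta>_def d_def
      using init X_diam by (intro L2_dev_bound n_pos) auto
    have avgxh: "avg n (xh k) = avg n (x k)" if "k \<ge> 1" for k
    proof -
      have "(\<Sum>i<n. xh k i) = (\<Sum>i<n. \<Sum>j<n. C i j *\<^sub>R x k j)" using xh_def that by simp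
      also have "\<dots> = (\<Sum>j<n. \<Sum>i<n. C i j *\<^sub>R x k j)" by (rule sum.swap)
      also have "\<dots> = (\<Sum>j<n. (\<Sum>i<n. C i j) *\<^sub>R x k j)" by (simp add: scaleR_sum_left)
      also have "\<dots> = (\<Sum>j<n. x k j)" using C_ds unfolding doubly_stochastic_def by simp
      finally show ?thesis unfolding avg_def by simp
    qed
    have F3: "\<Delta> (k+1) \<le> (1 - \<eta> k) * A k + \<eta> k * d" if k1: "k \<ge> 1" for k
    proof -
      define e where "e = \<eta> k"
      have e0: "0 \<le> e" "e \<le> 1" unfolding e_def by (simp_all add: eta divide_le_eq)
      have xr: "x (k+1) i = (1 - e) *\<^sub>R xh k i + e *\<^sub>R \<theta> k i" if "i < n" for i
        using x_rec k1 that unfolding e_def by (simp add: algebra_simps)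
      have "(\<Sum>i<n. x (k+1) i) = (\<Sum>i<n. (1 - e) *\<^sub>R xh k i + e *\<^sub>R \<theta> k i)"
        using xr by simp
      also have "\<dots> = (1 - e) *\<^sub>R (\<Sum>i<n. xh k i) + e *\<^sub>R (\<Sum>i<n. \<theta> k i)"
        by (simp add: sum.distrib scaleR_sum_right)
      finally have "avg n (x (k+1)) = (1 - e) *\<^sub>R avg n (xh k) + e *\<^sub>R avg n (\<theta> k)"
        unfolding avg_def by (simp add: scaleR_add_right)
      hence ax: "avg n (x (k+1)) = (1 - e) *\<^sub>R avg n (x k) + e *\<^sub>R avg n (\<theta> k)"
        using avgxh k1 by simp
      have dev: "norm (x (k+1) i - avg n (x (k+1)))
          \<le> (1 - e) * norm (xh k i - avg n (x k)) + e * norm (\<theta> k i - avg n (\<theta> k))"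
        if "i < n" for i
      proof -
        have "x (k+1) i - avg n (x (k+1)) = (1 - e) *\<^sub>R (xh k i - avg n (x k)) + e *\<^sub>R (\<theta> k i - avg n (\<theta> k))"
          unfolding xr[OF that] ax by (rule lin_comb_eq)
        hence "norm (x (k+1) i - avg n (x (k+1))) \<le> norm ((1 - e) *\<^sub>R (xh k i - avg n (x k))) + norm (e *\<^sub>R (\<theta> k i - avg n (\<theta> k)))"
          by (metis norm_triangle_ineq)
        thus ?thesis using e0 by simp
      qed
      have "\<Delta> (k+1) \<le> L2_set (\<lambda>i. (1 - e) * norm (xh k i - avg n (x k)) + e * norm (\<theta> k i - avg n (\<theta> k))) {..<n}"
        unfolding \<Delta>_def using dev by (intro L2_set_mono) auto
      also have "\<dots> \<le> L2_set (\<lambda>i. (1 - e) * norm (xh k i - avg n (x k))) {..<n} + L2_set (\<lambda>i. e * norm (\<theta> k i - avg n (\<theta> k))) {..<n}"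
        by (rule L2_set_triangle_ineq)
      also have "\<dots> = (1 - e) * A k + e * L2_set (\<lambda>i. norm (\<theta> k i - avg n (\<theta> k))) {..<n}"
        unfolding A_def using e0 by (simp add: L2_set_right_distrib)
      also have "\<dots> \<le> (1 - e) * A k + e * d"
      proof -
        have "L2_set (\<lambda>i. norm (\<theta> k i - avg n (\<theta> k))) {..<n} \<le> d"
          unfolding d_def using theta_lmo X_diam k1 by (intro L2_dev_bound n_pos) auto
        thus ?thesis using e0 by (simp add: mult_left_mono)
      qed
      finally show ?thesis unfolding e_def .
    qed
    have \<Delta>0: "0 \<le> \<Delta> k" for k unfolding \<Delta>_def by simp
    have eta01: "0 \<le> \<eta> k \<and> \<eta> k \<le> 1" if "k \<ge> 1" for k using that by (simp add: eta divide_le_eq)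
    have Dbound: "\<Delta> k \<le> d" if "k \<ge> 1" for k
      using that
    proof (induction k rule: nat_induct_at_least)
      case base show ?case using F2 .
    next
      case (Suc k)
      have "A k \<le> lam * \<Delta> k" using F1 Suc by simp
      also have "\<dots> \<le> \<Delta> k" using lam1 \<Delta>0[of k] by (simp add: mult_left_le_one_le lam0)
      finally have Ak: "A k \<le> d" using Suc by simp
      have "\<Delta> (Suc k) \<le> (1 - \<eta> k) * A k + \<eta> k * d" using F3 Suc by simp
      also have "\<dots> \<le> (1 - \<eta> k) * d + \<eta> k * d"
        using eta01[of k] Suc Ak by (simp add: mult_left_mono)
      also have "\<dots> = d" by (simp add: algebra_simps)
      finally show ?case .
    qed
    have Abound: "\<forall>k. 1 \<le> k \<longrightarrow> A k \<le> 2 * real m * d / (real k + 2)"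
    proof (intro allI)
      fix k show "1 \<le> k \<longrightarrow> A k \<le> 2 * real m * d / (real k + 2)"
      proof (induction k)
        case 0 show ?case by simp
      next
        case (Suc k)
        show ?case
        proof (cases "Suc k \<le> 2 * m")
          case True
          show ?thesis
          proof
            assume k1: "1 \<le> Suc k"
            have q1: "(real m / (real m + 1))\<^sup>2 \<le> real m / (real m + 1)"
            proof -
              have r0: "0 \<le> real m / (real m + 1)" by simp
              have r1: "real m / (real m + 1) \<le> 1" by simp
              show ?thesis unfolding power2_eq_square by (rule mult_left_le_one_le[OF r0 r0 r1])
            qed
            have q2: "real m / (real m + 1) \<le> 2 * real m / (real (Suc k) + 2)"
            proof -
              have "real (Suc k) \<le> real (2 * m)" using True by (simp only: of_nat_le_iff)
              hence h1: "real k + 1 \<le> 2 * real m" by simp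
              have "real m * (real k + 1) \<le> real m * (2 * real m)"
                using h1 by (intro mult_left_mono) auto
              thus ?thesis using m1 by (simp add: field_simps)
            qed
            have "A (Suc k) \<le> lam * \<Delta> (Suc k)" using F1 k1 by blast
            also have "\<dots> \<le> lam * d" using Dbound[OF k1] lam0 by (rule mult_left_mono)
            also have "\<dots> \<le> (2 * real m / (real (Suc k) + 2)) * d"
              using lamq q1 q2 d0 by (intro mult_right_mono) auto
            finally show "A (Suc k) \<le> 2 * real m * d / (real (Suc k) + 2)" by simp
          qed
        next
          case False
          hence k1: "1 \<le> k" and km: "2 * m \<le> k" using mprop by auto
          have IH: "A k \<le> 2 * real m * d / (real k + 2)" using Suc.IH k1 by simp
          have B: "\<Delta> (k+1) \<le> (real k / (real k + 2)) * A k + (2 / (real k + 2)) * d"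
          proof -
            have "1 - \<eta> k = real k / (real k + 2)" using eta by (simp add: field_simps)
            thus ?thesis using F3[OF k1] eta by simp
          qed
          have "A (Suc k) \<le> lam * \<Delta> (k+1)" using F1 by simp
          also have "\<dots> \<le> 2 * real m * d / (real k + 3)"
            using step_ineq[OF lam0 lamq m1 _ _ d0 IH B] km k1 by simp
          finally show ?thesis by (simp add: add.commute)
        qed
      qed
    qed
    show ?thesis
    proof (intro allI impI)
      fix i :: nat and k :: nat assume i: "i < n" and k: "1 \<le> k"
      have "norm (xh k i - avg n (x k)) \<le> A k"
        unfolding A_def using i by (intro member_le_L2_set) auto
      also have "\<dots> \<le> 2 * real m * d / (real k + 2)" using Abound k by blast
      finally show "norm (xh k i - avg n (x k))
           \<le> 2 * (real (k0_of (second_eig_mag n C)) * sqrt (real n) * D) / (real k + 2)"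
        unfolding m_def lam_def d_def by (simp add: mult.assoc)
    qed
  qed
qed

end
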